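(* Let $\gamma\in(0,\tfrac12)$, and let $\mathbf{w}\in\mathbb{R}^R$ be a fixed vector of regularization weights with strictly positive entries, and set $w_o=\min_{k=1,\dots,R} w_k$. Let $\boldsymbol{\theta}^\star\in\arg\min_{\boldsymbol{\theta}\in\mathbb{R}^R}\mathcal{R}(\boldsymbol{\theta})$ and $$\widehat{\boldsymbol{\theta}}\in\arg\min_{\boldsymbol{\theta}\in\mathbb{R}^R}\; -\frac1n\ln p_{\boldsymbol{\theta}}(\mathbf{y}\mid\mathbf{r}) + n^{-\gamma}\,\|\mathbf{w}\odot\boldsymbol{\theta}\|_1 ,$$ and assume both minimizers exist. Then $$\mathcal{R}(\widehat{\boldsymbol{\theta}})\le \mathcal{R}(\boldsymbol{\theta}^\star)+2n^{-\gamma}\,\|\mathbf{w}\odot\boldsymbol{\theta}^\star\|_1$$ holds with probability at least $$\max\Big(0,\;1-2R\exp\Big\{-\frac{w_o^2\,n^{1-2\gamma}}{2Y^2}\Big\}\Big).$$ The bound requires no assumption that $p(y\mid r)$ belongs to the Poisson model class.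
   Context: A spatial domain is partitioned into $R$ disjoint regions indexed by $r\in\{1,\dots,R\}$. Data $(\mathbf{r},\mathbf{y})=\{(r_1,y_1),\dots,(r_n,y_n)\}$ are $n$ independent draws $(r_i,y_i)\sim p(r)p(y\mid r)$ from an unknown distribution, where the counts satisfy $y_i\in\{0,1,\dots,Y\}$ for a known maximum count $Y$. Write $p(\mathbf{y}\mid\mathbf{r})=\prod_{i=1}^n p(y_i\mid r_i)$ and $\mathbb{E}[y\mid r]$ for the true conditional mean. Model class: for $\boldsymbol{\theta}\in\mathbb{R}^R$, $p_{\boldsymbol{\theta}}(y\mid r)$ is the Poisson distribution with mean $\mathbb{E}_{\boldsymbol{\theta}}[y\mid r]=\exp(\boldsymbol{\phi}(r)^\top\boldsymbol{\theta})$, where $\boldsymbol{\phi}(r)=(\phi_1(r),\dots,\phi_R(r))^\top$ is a fixed spatial basis vector (cubic B-spline values, $\phi_k$ centered at region $k$) with $0\le\phi_k(r)\le 1$ for all $k,r$; and $p_{\boldsymbol{\theta}}(\mathbf{y}\mid\mathbf{r})=\prod_{i=1}^n p_{\boldsymbol{\theta}}(y_i\mid r_i)$. Out-of-sample accuracy (KL divergence per sample, conditional on $\mathbf{r}$): $$\mathcal{R}(\boldsymbol{\theta})=\frac1n\,\mathbb{E}_{\mathbf{y}\mid\mathbf{r}}\Big[\ln\frac{p(\mathbf{y}\mid\mathbf{r})}{p_{\boldsymbol{\theta}}(\mathbf{y}\mid\mathbf{r})}\Big].$$ $\odot$ denotes the elementwise (Hadamard) product. *)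

theory Defs
  imports "HOL-Probability.Probability"
begin

text \<open>Regions are the elements of a finite type 'r (so R = CARD('r)); parameter vectors
  theta in R^R are functions 'r => real.  The basis is phi r k = phi_k(r).\<close>

definition pois_mean :: "('r::finite \<Rightarrow> 'r \<Rightarrow> real) \<Rightarrow> ('r \<Rightarrow> real) \<Rightarrow> 'r \<Rightarrow> real" where
  "pois_mean \<phi> \<theta> r = exp (\<Sum>k\<in>UNIV. \<phi> r k * \<theta> k)"

definition model_lik :: "('r::finite \<Rightarrow> 'r \<Rightarrow> real) \<Rightarrow> ('r \<Rightarrow> real) \<Rightarrow> nat \<Rightarrow> (nat \<Rightarrow> 'r) \<Rightarrow> (nat \<Rightarrow> nat) \<Rightarrow> real" where
  "model_lik \<phi> \<theta> n rs ys = (\<Prod>i<n. pmf (poisson_pmf (pois_mean \<phi> \<theta> (rs i))) (ys i))"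

definition true_law :: "('r \<Rightarrow> nat pmf) \<Rightarrow> nat \<Rightarrow> (nat \<Rightarrow> 'r) \<Rightarrow> (nat \<Rightarrow> nat) pmf" where
  "true_law q n rs = Pi_pmf {..<n} 0 (\<lambda>i. q (rs i))"

definition true_lik :: "('r \<Rightarrow> nat pmf) \<Rightarrow> nat \<Rightarrow> (nat \<Rightarrow> 'r) \<Rightarrow> (nat \<Rightarrow> nat) \<Rightarrow> real" where
  "true_lik q n rs ys = (\<Prod>i<n. pmf (q (rs i)) (ys i))"

definition risk :: "('r \<Rightarrow> nat pmf) \<Rightarrow> ('r::finite \<Rightarrow> 'r \<Rightarrow> real) \<Rightarrow> nat \<Rightarrow> (nat \<Rightarrow> 'r) \<Rightarrow> ('r \<Rightarrow> real) \<Rightarrow> real" where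
  "risk q \<phi> n rs \<theta> = (1 / real n) *
     measure_pmf.expectation (true_law q n rs)
       (\<lambda>ys. ln (true_lik q n rs ys / model_lik \<phi> \<theta> n rs ys))"

definition pen_obj :: "('r::finite \<Rightarrow> 'r \<Rightarrow> real) \<Rightarrow> nat \<Rightarrow> (nat \<Rightarrow> 'r) \<Rightarrow> real \<Rightarrow> ('r \<Rightarrow> real) \<Rightarrow> (nat \<Rightarrow> nat) \<Rightarrow> ('r \<Rightarrow> real) \<Rightarrow> real" where
  "pen_obj \<phi> n rs \<gamma> w ys \<theta> =
     - (1 / real n) * ln (model_lik \<phi> \<theta> n rs ys)
     + real n powr (-\<gamma>) * (\<Sum>k\<in>UNIV. \<bar>w k * \<theta> k\<bar>)"

end

theory Submission
  imports Defs
begin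


lemma ln_pois: "ln (pmf (poisson_pmf (exp s)) k) = real k * s - exp s - ln (fact k)"
proof -
  have "pmf (poisson_pmf (exp s)) k = exp (real k * s) / fact k * exp (- exp s)"
    by (simp add: pmf_poisson[OF exp_gt_zero] exp_of_nat_mult)
  then show ?thesis by (simp add: ln_mult ln_div)
qed

lemma pois_pos: "pmf (poisson_pmf (exp s)) k > 0"
  by (simp add: pmf_poisson[OF exp_gt_zero])

theorem theorem1:
  fixes \<phi> :: "'r::finite \<Rightarrow> 'r \<Rightarrow> real"
    and q :: "'r \<Rightarrow> nat pmf"
    and Y n :: nat
    and rs :: "nat \<Rightarrow> 'r"
    and \<gamma> :: real
    and w \<theta>star :: "'r \<Rightarrow> real"
  assumes basis: "\<And>r k. 0 \<le> \<phi> r k \<and> \<phi> r k \<le> 1"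
    and support: "\<And>r. set_pmf (q r) \<subseteq> {0..Y}"
    and n_pos: "n \<ge> 1"
    and gamma: "0 < \<gamma>" "\<gamma> < 1/2"
    and w_pos: "\<And>k. w k > 0"
    and star_min: "\<And>\<theta>. risk q \<phi> n rs \<theta>star \<le> risk q \<phi> n rs \<theta>"
    and hat_exists: "\<And>ys. ys \<in> set_pmf (true_law q n rs) \<Longrightarrow>
                       \<exists>\<theta>h. \<forall>\<theta>. pen_obj \<phi> n rs \<gamma> w ys \<theta>h \<le> pen_obj \<phi> n rs \<gamma> w ys \<theta>"
  shows "measure_pmf.prob (true_law q n rs)
           {ys. \<forall>\<theta>h. (\<forall>\<theta>. pen_obj \<phi> n rs \<gamma> w ys \<theta>h \<le> pen_obj \<phi> n rs \<gamma> w ys \<theta>) \<longrightarrow>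
                  risk q \<phi> n rs \<theta>h \<le> risk q \<phi> n rs \<theta>star
                      + 2 * real n powr (-\<gamma>) * (\<Sum>k\<in>UNIV. \<bar>w k * \<theta>star k\<bar>)}
         \<ge> max 0 (1 - 2 * real CARD('r) *
              exp (- ((Min (range w))\<^sup>2 * real n powr (1 - 2 * \<gamma>) / (2 * (real Y)\<^sup>2))))"
  proof -
  define M where "M = true_law q n rs"
  define S where "S = set_pmf M"
  define s where "s \<theta> i = (\<Sum>k\<in>UNIV. \<phi> (rs i) k * \<theta> k)" for \<theta> :: "'r \<Rightarrow> real" and i
  define G where "G k ys = (\<Sum>i<n. real (ys i) * \<phi> (rs i) k)" for k and ys :: "nat \<Rightarrow> nat"
  define EG where "EG k = measure_pmf.expectation M (G k)" for k
  define lam where "lam = real n powr (-\<gamma>)"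
  define Z where "Z k ys = (G k ys - EG k) / real n" for k ys
  define A where "A \<theta> = (\<Sum>i<n. exp (s \<theta> i))" for \<theta>
  define F where "F ys = (\<Sum>i<n. ln (fact (ys i) :: real))" for ys :: "nat \<Rightarrow> nat"
  define Lm where "Lm \<theta> ys = -(1/real n) * ln (model_lik \<phi> \<theta> n rs ys)" for \<theta> ys
  define C where "C = measure_pmf.expectation M (\<lambda>ys. ln (true_lik q n rs ys)) + measure_pmf.expectation M F"
  have npos: "real n > 0" using n_pos by simp
  have S_eq: "S = PiE_dflt {..<n} 0 (set_pmf \<circ> (\<lambda>i. q (rs i)))"
    unfolding S_def M_def true_law_def by (simp add: set_Pi_pmf)
  have S_mem: "ys i \<in> set_pmf (q (rs i))" if "ys \<in> S" "i < n" for ys i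
    using that unfolding S_eq PiE_dflt_def by auto
  have finS: "finite S"
  proof -
    have "S \<subseteq> PiE_dflt {..<n} 0 (\<lambda>_. {0..Y})"
      using support unfolding S_eq PiE_dflt_def by (auto, metis atLeastAtMost_iff subsetD)
    moreover have "finite (PiE_dflt {..<n} (0::nat) (\<lambda>_. {0..Y}))" by (intro finite_PiE_dflt) auto
    ultimately show ?thesis by (rule finite_subset)
  qed
  have intM: "integrable (measure_pmf M) f" for f :: "(nat \<Rightarrow> nat) \<Rightarrow> real"
    using finS unfolding S_def by (rule integrable_measure_pmf_finite)
  have lnmod: "ln (model_lik \<phi> \<theta> n rs ys) = (\<Sum>k\<in>UNIV. \<theta> k * G k ys) - A \<theta> - F ys" for \<theta> ys
  proof -
    have "ln (model_lik \<phi> \<theta> n rs ys) = (\<Sum>i<n. ln (pmf (poisson_pmf (exp (s \<theta> i))) (ys i)))"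
      unfolding model_lik_def pois_mean_def s_def
      by (rule ln_prod) (auto intro: pois_pos[THEN less_imp_neq, symmetric])
    also have "\<dots> = (\<Sum>i<n. real (ys i) * s \<theta> i) - A \<theta> - F ys"
      by (simp only: ln_pois A_def F_def sum_subtractf)
    also have "(\<Sum>i<n. real (ys i) * s \<theta> i) = (\<Sum>k\<in>UNIV. \<theta> k * G k ys)"
      unfolding s_def G_def by (simp add: sum_distrib_left mult_ac sum.swap[of _ "{..<n}"])
    finally show ?thesis .
  qed
  have risk_eq: "risk q \<phi> n rs \<theta> = (C + A \<theta> - (\<Sum>k\<in>UNIV. \<theta> k * EG k)) / real n" for \<theta>
  proof -
    have "measure_pmf.expectation M (\<lambda>ys. ln (true_lik q n rs ys / model_lik \<phi> \<theta> n rs ys))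
        = measure_pmf.expectation M (\<lambda>ys. (ln (true_lik q n rs ys) + F ys + A \<theta>) - (\<Sum>k\<in>UNIV. \<theta> k * G k ys))"
    proof (rule integral_cong_AE)
      show "AE ys in measure_pmf M. ln (true_lik q n rs ys / model_lik \<phi> \<theta> n rs ys) =
          (ln (true_lik q n rs ys) + F ys + A \<theta>) - (\<Sum>k\<in>UNIV. \<theta> k * G k ys)"
      proof (rule AE_pmfI)
        fix ys assume ys: "ys \<in> set_pmf M"
        have tp: "true_lik q n rs ys > 0"
          unfolding true_lik_def using S_mem[of ys] ys unfolding S_def
          by (intro prod_pos) (auto simp: pmf_positive)
        have mp: "model_lik \<phi> \<theta> n rs ys > 0"
          unfolding model_lik_def pois_mean_def by (intro prod_pos) (auto intro: pois_pos)
        show "ln (true_lik q n rs ys / model_lik \<phi> \<theta> n rs ys) =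
          (ln (true_lik q n rs ys) + F ys + A \<theta>) - (\<Sum>k\<in>UNIV. \<theta> k * G k ys)"
          using tp mp by (simp add: ln_div lnmod)
      qed
    qed auto
    also have "\<dots> = C + A \<theta> - (\<Sum>k\<in>UNIV. \<theta> k * EG k)"
      by (simp add: intM C_def EG_def integral_sum)
    finally show ?thesis unfolding risk_def M_def by simp
  qed
  have key: "risk q \<phi> n rs \<theta> = C / real n - F ys / real n + Lm \<theta> ys + (\<Sum>k\<in>UNIV. \<theta> k * Z k ys)" for \<theta> ys
  proof -
    have "(\<Sum>k\<in>UNIV. \<theta> k * Z k ys) = ((\<Sum>k\<in>UNIV. \<theta> k * G k ys) - (\<Sum>k\<in>UNIV. \<theta> k * EG k)) / real n"
      unfolding Z_def by (simp add: sum_subtractf[symmetric] sum_divide_distrib right_diff_distrib)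
    then show ?thesis unfolding risk_eq Lm_def lnmod using npos by (simp add: field_simps)
  qed
  have pen_eq: "pen_obj \<phi> n rs \<gamma> w ys \<theta> = Lm \<theta> ys + lam * (\<Sum>k\<in>UNIV. \<bar>w k * \<theta> k\<bar>)" for ys \<theta>
    unfolding pen_obj_def Lm_def lam_def by simp
  define Good where "Good = {ys. \<forall>k. \<bar>Z k ys\<bar> \<le> lam * w k}"
  define Ev where "Ev = {ys. \<forall>\<theta>h. (\<forall>\<theta>. pen_obj \<phi> n rs \<gamma> w ys \<theta>h \<le> pen_obj \<phi> n rs \<gamma> w ys \<theta>) \<longrightarrow>
                  risk q \<phi> n rs \<theta>h \<le> risk q \<phi> n rs \<theta>star
                      + 2 * real n powr (-\<gamma>) * (\<Sum>k\<in>UNIV. \<bar>w k * \<theta>star k\<bar>)}"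
  have GoodEv: "Good \<subseteq> Ev"
  proof
    fix ys assume "ys \<in> Good"
    then have gz: "\<bar>Z k ys\<bar> \<le> lam * w k" for k unfolding Good_def by (auto simp: not_le intro: less_imp_le)
    have bnd: "\<bar>\<Sum>k\<in>UNIV. \<theta> k * Z k ys\<bar> \<le> lam * (\<Sum>k\<in>UNIV. \<bar>w k * \<theta> k\<bar>)" for \<theta>
    proof -
      have "\<bar>\<Sum>k\<in>UNIV. \<theta> k * Z k ys\<bar> \<le> (\<Sum>k\<in>UNIV. \<bar>\<theta> k * Z k ys\<bar>)" by (rule sum_abs)
      also have "\<dots> \<le> (\<Sum>k\<in>UNIV. lam * \<bar>w k * \<theta> k\<bar>)"
      proof (rule sum_mono)
        fix k
        have "\<bar>\<theta> k * Z k ys\<bar> = \<bar>\<theta> k\<bar> * \<bar>Z k ys\<bar>" by (simp add: abs_mult)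
        also have "\<dots> \<le> \<bar>\<theta> k\<bar> * (lam * w k)" by (rule mult_left_mono[OF gz]) simp
        also have "\<dots> = lam * \<bar>w k * \<theta> k\<bar>" using w_pos[of k] by (simp add: abs_mult)
        finally show "\<bar>\<theta> k * Z k ys\<bar> \<le> lam * \<bar>w k * \<theta> k\<bar>" .
      qed
      finally show ?thesis by (simp add: sum_distrib_left)
    qed
    show "ys \<in> Ev" unfolding Ev_def
    proof (intro CollectI allI impI)
      fix \<theta>h assume "\<forall>\<theta>. pen_obj \<phi> n rs \<gamma> w ys \<theta>h \<le> pen_obj \<phi> n rs \<gamma> w ys \<theta>"
      then have m: "pen_obj \<phi> n rs \<gamma> w ys \<theta>h \<le> pen_obj \<phi> n rs \<gamma> w ys \<theta>star" by blast
      show "risk q \<phi> n rs \<theta>h \<le> risk q \<phi> n rs \<theta>star + 2 * real n powr (-\<gamma>) * (\<Sum>k\<in>UNIV. \<bar>w k * \<theta>star k\<bar>)"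
        using m bnd[of \<theta>h] bnd[of \<theta>star] key[of \<theta>h ys] key[of \<theta>star ys]
        unfolding pen_eq lam_def[symmetric] by linarith
    qed
  qed
  have probEv: "measure_pmf.prob M Ev \<ge> max 0 (1 - 2 * real CARD('r) *
              exp (- ((Min (range w))\<^sup>2 * real n powr (1 - 2 * \<gamma>) / (2 * (real Y)\<^sup>2))))"
  proof (cases "Y = 0")
    case True
    have "real CARD('r) \<ge> 1" by simp
    then have "2 * real CARD('r) > 1" by linarith
    then show ?thesis using True by (simp add: max_def)
  next
    case False
    then have Ypos: "real Y > 0" by simp
    define wm where "wm = Min (range w)"
    define P where "P = real n powr (1 - 2 * \<gamma>)"
    define B where "B = exp (- (wm\<^sup>2 * P / (2 * (real Y)\<^sup>2)))"
    have "wm \<in> range w" unfolding wm_def by (rule Min_in) auto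
    then obtain j where "wm = w j" by auto
    then have wm_pos: "wm > 0" using w_pos by simp
    have wm_le: "wm \<le> w k" for k unfolding wm_def by (rule Min_le) auto
    have P_eq: "P = real n * lam\<^sup>2"
    proof -
      have "lam\<^sup>2 = real n powr (-\<gamma> + -\<gamma>)" unfolding lam_def power2_eq_square powr_add by simp
      then have "real n * lam\<^sup>2 = real n powr 1 * real n powr (-\<gamma> + -\<gamma>)" using npos by simp
      also have "\<dots> = P" unfolding P_def powr_add[symmetric] by simp
      finally show ?thesis by simp
    qed
    have P_nn: "P \<ge> 0" unfolding P_def by simp
    have bad: "measure_pmf.prob M {ys. lam * w k \<le> \<bar>Z k ys\<bar>} \<le> 2 * B" for k
    proof -
      define X where "X i ys = real (ys i) * \<phi> (rs i) k" for i and ys :: "nat \<Rightarrow> nat"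
      define \<mu> where "\<mu> = (\<Sum>i<n. measure_pmf.expectation M (X i))"
      interpret H: Hoeffding_ineq "measure_pmf M" "{..<n}" X "\<lambda>_. 0" "\<lambda>_. real Y" \<mu>
      proof unfold_locales
        show "prob_space.indep_vars (measure_pmf M) (\<lambda>_. borel) X {..<n}"
          unfolding X_def M_def true_law_def
          by (intro prob_space.indep_vars_compose2[OF _ indep_vars_Pi_pmf])
             (auto simp: measure_pmf.prob_space_axioms)
      next
        fix i assume i: "i \<in> {..<n}"
        show "AE x in measure_pmf M. X i x \<in> {0..real Y}"
        proof (rule AE_pmfI)
          fix ys assume ys: "ys \<in> set_pmf M"
          have "ys \<in> S" using ys S_def by simp
          then have "ys i \<in> set_pmf (q (rs i))" using S_mem i by auto
          then have "ys i \<in> {0..Y}" using support by blast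
          then have yi: "real (ys i) \<le> real Y" by simp
          have "real (ys i) * \<phi> (rs i) k \<le> real (ys i) * 1"
            using basis by (intro mult_left_mono) auto
          then show "X i ys \<in> {0..real Y}" unfolding X_def using basis[of "rs i" k] yi by auto
        qed
      qed (auto simp: \<mu>_def)
      define \<epsilon> where "\<epsilon> = lam * w k * real n"
      have eps_nn: "\<epsilon> \<ge> 0" unfolding \<epsilon>_def lam_def using w_pos[of k] by simp
      have sumpos: "(\<Sum>i<n. ((\<lambda>_. real Y) i - (\<lambda>_. 0) i)\<^sup>2) = real n * (real Y)\<^sup>2" by simp
      have "(\<Sum>i<n. ((\<lambda>_. real Y) i - (\<lambda>_. 0) i)\<^sup>2) > 0" using npos Ypos by simp
      note H = H.Hoeffding_ineq_abs_ge[OF eps_nn this]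
      have EGk: "EG k = \<mu>" unfolding EG_def \<mu>_def G_def X_def by (simp add: intM)
      have seteq: "{ys. lam * w k \<le> \<bar>Z k ys\<bar>} = {x \<in> space (measure_pmf M). \<epsilon> \<le> \<bar>(\<Sum>i<n. X i x) - \<mu>\<bar>}"
      proof -
        have "lam * w k \<le> \<bar>Z k ys\<bar> \<longleftrightarrow> \<epsilon> \<le> \<bar>(\<Sum>i<n. X i ys) - \<mu>\<bar>" for ys
        proof -
          have "\<bar>Z k ys\<bar> = \<bar>(\<Sum>i<n. X i ys) - \<mu>\<bar> / real n"
            unfolding Z_def EGk G_def X_def using npos by simp
          then show ?thesis unfolding \<epsilon>_def using npos by (simp add: pos_le_divide_eq[OF npos])
        qed
        then show ?thesis by auto
      qed
      have "measure_pmf.prob M {ys. lam * w k \<le> \<bar>Z k ys\<bar>} \<le> 2 * exp (-2 * \<epsilon>\<^sup>2 / (real n * (real Y)\<^sup>2))"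
        using H unfolding seteq sumpos .
      also have "\<dots> \<le> 2 * B" unfolding B_def
      proof -
        have e: "-2 * \<epsilon>\<^sup>2 / (real n * (real Y)\<^sup>2) = - (2 * P * (w k)\<^sup>2 / (real Y)\<^sup>2)"
          unfolding \<epsilon>_def P_eq using npos by (simp add: field_simps power2_eq_square)
        have w2: "wm\<^sup>2 \<le> (w k)\<^sup>2" using wm_le[of k] wm_pos by (intro power_mono) auto
        have "wm\<^sup>2 * P \<le> 4 * ((w k)\<^sup>2 * P)" 
        proof -
          have "wm\<^sup>2 * P \<le> (w k)\<^sup>2 * P" using w2 P_nn by (rule mult_right_mono)
          moreover have "(w k)\<^sup>2 * P \<ge> 0" using P_nn by simp
          ultimately show ?thesis by linarith
        qed
        then have "wm\<^sup>2 * P / (2 * (real Y)\<^sup>2) \<le> 2 * P * (w k)\<^sup>2 / (real Y)\<^sup>2"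
          using Ypos by (simp add: field_simps)
        then show "2 * exp (-2 * \<epsilon>\<^sup>2 / (real n * (real Y)\<^sup>2)) \<le> 2 * exp (- (wm\<^sup>2 * P / (2 * (real Y)\<^sup>2)))"
          unfolding e by simp
      qed
      finally show ?thesis .
    qed
    have sub: "UNIV - Good \<subseteq> (\<Union>k. {ys. lam * w k \<le> \<bar>Z k ys\<bar>})" unfolding Good_def by (auto simp: not_le intro: less_imp_le)
    have "measure_pmf.prob M Ev \<ge> measure_pmf.prob M Good"
      using GoodEv by (intro measure_pmf.finite_measure_mono) auto
    moreover have "measure_pmf.prob M Good = 1 - measure_pmf.prob M (UNIV - Good)"
      using measure_pmf.prob_compl[of Good M] by simp
    moreover have "measure_pmf.prob M (UNIV - Good) \<le> measure_pmf.prob M (\<Union>k. {ys. lam * w k \<le> \<bar>Z k ys\<bar>})"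
      using sub by (intro measure_pmf.finite_measure_mono) auto
    moreover have "measure_pmf.prob M (\<Union>k. {ys. lam * w k \<le> \<bar>Z k ys\<bar>}) \<le> (\<Sum>k\<in>UNIV. measure_pmf.prob M {ys. lam * w k \<le> \<bar>Z k ys\<bar>})"
      by (intro measure_pmf.finite_measure_subadditive_finite) auto
    moreover have "(\<Sum>k\<in>UNIV. measure_pmf.prob M {ys. lam * w k \<le> \<bar>Z k ys\<bar>}) \<le> (\<Sum>k\<in>(UNIV::'r set). 2 * B)"
      by (intro sum_mono bad)
    moreover have "(\<Sum>k\<in>(UNIV::'r set). 2 * B) = 2 * real CARD('r) * B" by simp
    ultimately have "measure_pmf.prob M Ev \<ge> 1 - 2 * real CARD('r) * B" by linarith
    then show ?thesis unfolding B_def P_def wm_def by (simp add: max_def)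
  qed
  then show ?thesis unfolding Ev_def M_def by simp
qed

end
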